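(* Let $n\geq1$. For every $j\in\{0,1,\dots,n-1\}$, with $\xi_n=e^{2i\pi/n}$, $$\overline{O}_n(\xi_n^j)=\#\{P\in\overline{\mathcal{O}}_n:\ \mathbf{r}^j(P)=P\};$$ that is, the triple $(\overline{\mathcal{O}}_n,\langle\mathbf{r}\rangle,\overline{O}_n(q))$ exhibits the cyclic sieving phenomenon.
   Context: $\overline{\mathcal{O}}_n$ is the set of lattice paths from $(0,i)$ to $(n,i)$, for some integer $i\geq0$, with steps $D=(1,-1)$, $U=(1,1)$ and two distinguishable kinds of horizontal steps $H_1=H_2=(1,0)$, which stay weakly above the $x$-axis and touch it at least once. Equivalently, such a path is determined by its step word $w_1\cdots w_n\in\{D,H_1,H_2,U\}^n$ having as many $U$'s as $D$'s, the starting height being forced by the condition that the minimum height is $0$. The area of a path is the area of the region between the path and the $x$-axis (an integer), and $\overline{O}_n(q)=\sum_{P\in\overline{\mathcal{O}}_n}q^{\mathrm{area}(P)}$. The rotation $\mathbf{r}$ acts on $\overline{\mathcal{O}}_n$ by cyclically shifting the step word one position to the right, $w_1\cdots w_n\mapsto w_nw_1\cdots w_{n-1}$ (re-choosing the starting height so the minimum height is $0$); it generates a cyclic group of order $n$. A triple $(X,C,P)$ with $C=\langle c\rangle$ cyclic of order $n$ acting on finite $X$ and $P\in\mathbb{N}[q]$ exhibits the cyclic sieving phenomenon if $P(\xi_n^j)$ equals the number of elements of $X$ fixed by $c^j$ for every $j$. *)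

theory Defs
  imports Complex_Main "HOL-Computational_Algebra.Polynomial"
begin

text \<open>Steps D = (1,-1), two kinds of horizontal steps H1, H2 = (1,0), and U = (1,1).\<close>
datatype step = D | H1 | H2 | U

fun dy :: "step \<Rightarrow> int" where
  "dy D = -1" | "dy H1 = 0" | "dy H2 = 0" | "dy U = 1"

text \<open>A path in the set Obar_n is identified with its step word: length n and as many U as D.
  The starting height is forced by requiring the minimum height to be 0.\<close>
definition Opaths :: "nat \<Rightarrow> step list set" where
  "Opaths n = {w. length w = n \<and> count_list w U = count_list w D}"

definition relh :: "step list \<Rightarrow> nat \<Rightarrow> int" where
  "relh w k = (\<Sum>i<k. dy (w ! i))"

definition height :: "step list \<Rightarrow> nat \<Rightarrow> int" where
  "height w k = relh w k - Min ((relh w) ` {0..length w})"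

text \<open>Area between the path and the x-axis: each step contributes the trapezoid area
  (h_{k-1} + h_k)/2; the total is an integer since the number of non-horizontal steps is even.\<close>
definition area :: "step list \<Rightarrow> nat" where
  "area w = nat ((\<Sum>k\<in>{1..length w}. height w (k - 1) + height w k) div 2)"

definition Opoly :: "nat \<Rightarrow> complex poly" where
  "Opoly n = (\<Sum>w\<in>Opaths n. monom 1 (area w))"

definition rot :: "step list \<Rightarrow> step list" where
  "rot w = (if w = [] then [] else last w # butlast w)"

end

theory Submission
  imports Defs "HOL-Library.Real_Mod"
begin


definition ab :: "step \<Rightarrow> bool" where "ab s = (s = U \<or> s = H1)"
definition bb :: "step \<Rightarrow> bool" where "bb s = (s = U \<or> s = H2)"
definition sbit :: "bool \<Rightarrow> step \<Rightarrow> bool" where "sbit e s = (if e then bb s else ab s)"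

fun mk :: "bool \<Rightarrow> bool \<Rightarrow> step" where
  "mk True True = U" | "mk False False = D" | "mk True False = H1" | "mk False True = H2"

lemma mk_bits: "mk (ab s) (bb s) = s"
  by (cases s) (auto simp: ab_def bb_def)

lemma ab_mk[simp]: "ab (mk a b) = a" and bb_mk[simp]: "bb (mk a b) = b"
  by (cases a; cases b; simp add: ab_def bb_def)+

lemma step_eq_sbits: "s = t \<longleftrightarrow> (\<forall>e. sbit e s = sbit e t)"
  unfolding sbit_def by (cases s; cases t; auto simp: ab_def bb_def)

lemma dy_sbits: "dy s = of_bool (sbit False s) + of_bool (sbit True s) - 1"
  by (cases s) (auto simp: sbit_def ab_def bb_def)

lemma sum_list_dy: "sum_list (map dy w) = int (count_list w U) - int (count_list w D)"
  by (induct w) (auto, case_tac a, auto)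

lemma sum_dy_nth: "(\<Sum>i<length w. dy (w!i)) = sum_list (map dy w)"
  by (simp add: sum_list_sum_nth atLeast0LessThan)

lemma Opaths_iff: "w \<in> Opaths n \<longleftrightarrow> length w = n \<and> (\<Sum>i<n. dy (w!i)) = 0"
  unfolding Opaths_def using sum_dy_nth[of w] sum_list_dy[of w] by auto

lemma finite_Opaths: "finite (Opaths n)"
proof -
  have "Opaths n \<subseteq> {xs. set xs \<subseteq> UNIV \<and> length xs = n}" by (auto simp: Opaths_def)
  moreover have "finite (UNIV :: step set)"
  proof -
    have "(UNIV :: step set) = {D,H1,H2,U}" by (auto intro: step.exhaust)
    moreover have "finite {D,H1,H2,U}" by simp
    ultimately show ?thesis by metis
  qed
  ultimately show ?thesis using finite_lists_length_eq finite_subset by blast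
qed

lemma telesc: fixes N :: nat shows "(\<Sum>k\<in>{1..N}. f (k - 1) + f k) = 2 * (\<Sum>k<N. f k) + f N - (f 0 :: int)"
  by (induct N) (auto simp: atLeastAtMostSuc_conv algebra_simps)

lemma double_sum: "(\<Sum>k<N. \<Sum>i<k. f i) = (\<Sum>i<N. (int N - 1 - int i) * (f i :: int))"
proof (induct N)
  case (Suc N)
  have "(\<Sum>k<Suc N. \<Sum>i<k. f i) = (\<Sum>i<N. (int N - 1 - int i) * f i) + (\<Sum>i<N. f i)"
    using Suc by simp
  also have "\<dots> = (\<Sum>i<N. (int N - int i) * f i)"
    by (simp add: sum.distrib[symmetric] algebra_simps)
  also have "\<dots> = (\<Sum>i<Suc N. (int (Suc N) - 1 - int i) * f i)" by simp
  finally show ?case .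
qed simp

definition sig :: "step list \<Rightarrow> int" where
  "sig w = (\<Sum>i<length w. int i * dy (w!i))"

lemma area_formula:
  assumes "w \<in> Opaths n"
  shows "int (area w) = - sig w - int n * Min ((relh w) ` {0..length w})"
proof -
  define M where "M = Min ((relh w) ` {0..length w})"
  have len: "length w = n" using assms by (simp add: Opaths_iff)
  have bal: "(\<Sum>i<n. dy (w!i)) = 0" using assms by (simp add: Opaths_iff)
  have hn: "height w n = height w 0"
    using bal len by (simp add: height_def relh_def)
  have hpos: "height w k \<ge> 0" if "k \<le> n" for k
    using that len by (auto simp: height_def intro!: Min_le)
  have "(\<Sum>k\<in>{1..n}. height w (k - 1) + height w k) = 2 * (\<Sum>k<n. height w k)"
    using telesc[of "height w" n] hn by simp
  hence "area w = nat (\<Sum>k<n. height w k)"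
    using len by (simp add: area_def)
  moreover have "(\<Sum>k<n. height w k) \<ge> 0" using hpos by (auto intro: sum_nonneg)
  ultimately have "int (area w) = (\<Sum>k<n. height w k)" by simp
  also have "\<dots> = (\<Sum>k<n. relh w k) - int n * M"
    by (simp add: height_def M_def sum_subtractf)
  also have "(\<Sum>k<n. relh w k) = (\<Sum>i<n. (int n - 1 - int i) * dy (w!i))"
    unfolding relh_def by (rule double_sum)
  also have "\<dots> = (int n - 1) * (\<Sum>i<n. dy (w!i)) - sig w"
    by (simp add: sig_def len algebra_simps sum_subtractf sum_distrib_left sum.distrib)
  finally show ?thesis using bal M_def by simp
qed


lemma sum_blocks: fixes d :: nat shows "(\<Sum>p<d*m. f p) = (\<Sum>q<d. \<Sum>r<m. f (q*m+r))"
proof (induct d)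
  case (Suc d)
  have "{..<Suc d * m} = {..<d*m} \<union> {d*m..<d*m+m}" by auto
  hence "(\<Sum>p<Suc d*m. f p) = sum f ({..<d*m} \<union> {d*m..<d*m+m})" by simp
  also have "\<dots> = (\<Sum>p<d*m. f p) + (\<Sum>p\<in>{d*m..<d*m+m}. f p)"
    by (rule sum.union_disjoint) auto
  also have "(\<Sum>p\<in>{d*m..<d*m+m}. f p) = (\<Sum>r<m. f (d*m+r))"
  proof -
    have "{d*m..<d*m+m} = plus (d*m) ` {0..<m}" by (simp add: add.commute)
    thus ?thesis by (simp add: sum.reindex inj_on_def atLeast0LessThan)
  qed
  finally show ?case using Suc by simp
qed simp

lemma modlem: "x < m' \<Longrightarrow> Suc (x + m') mod Suc m' = x"
proof -
  assume "x < m'"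
  have "Suc (x + m') = x + Suc m'" by simp
  thus ?thesis using \<open>x < m'\<close> by (metis mod_add_self2 mod_less less_SucI)
qed

lemma rot_sum:
  assumes "0 < (m::nat)"
  shows "(\<Sum>r<m. f ((r+m-1) mod m)) = (\<Sum>r<m. f r)"
proof -
  obtain m' where m: "m = Suc m'" using assms by (cases m) auto
  have "(\<Sum>r<m. f ((r+m-1) mod m)) = f m' + (\<Sum>i<m'. f ((Suc i + m') mod Suc m'))"
    unfolding m by (subst sum.lessThan_Suc_shift) simp
  also have "(\<Sum>i<m'. f ((Suc i + m') mod Suc m')) = (\<Sum>i<m'. f i)"
    by (rule sum.cong) (auto simp: modlem)
  also have "f m' + (\<Sum>i<m'. f i) = (\<Sum>r<m. f r)" unfolding m by (simp add: add.commute)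
  finally show ?thesis .
qed

lemma rot_wsum:
  assumes "0 < (m::nat)"
  shows "(\<Sum>r<m. int r * f ((r+m-1) mod m)) = (\<Sum>r<m. int r * f r) + (\<Sum>r<m. f r) - int m * (f (m-1) :: int)"
proof -
  obtain m' where m: "m = Suc m'" using assms by (cases m) auto
  have "(\<Sum>r<m. int r * f ((r+m-1) mod m)) = (\<Sum>i<m'. int (Suc i) * f ((Suc i + m') mod Suc m'))"
    unfolding m by (subst sum.lessThan_Suc_shift) simp
  also have "\<dots> = (\<Sum>i<m'. int i * f i + f i)"
    by (rule sum.cong) (auto simp: algebra_simps modlem)
  finally show ?thesis unfolding m by (simp add: sum.distrib algebra_simps)
qed

definition mix :: "bool \<Rightarrow> step \<Rightarrow> step \<Rightarrow> step" where
  "mix e s t = mk (if e then ab s else ab t) (if e then bb t else bb s)"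

lemma sbit_mix: "sbit e' (mix e s t) = (if e' = e then sbit e t else sbit e' s)"
  by (auto simp: mix_def sbit_def)

locale cyc =
  fixes m d :: nat
  assumes mpos: "0 < m"
begin

definition cnt :: "step list \<Rightarrow> nat \<Rightarrow> bool \<Rightarrow> nat" where
  "cnt w q e = (\<Sum>r<m. of_bool (sbit e (w!(q*m+r))))"

definition cntk :: "step list \<Rightarrow> nat \<Rightarrow> nat" where
  "cntk w k = cnt w (k div 2) (odd k)"

definition badk :: "step list \<Rightarrow> nat \<Rightarrow> bool" where
  "badk w k = (k < 2*d \<and> 0 < cntk w k \<and> cntk w k < m)"

definition bad :: "step list \<Rightarrow> bool" where
  "bad w = (w \<in> Opaths (d*m) \<and> (\<exists>k. badk w k))"

definition key :: "step list \<Rightarrow> nat" where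
  "key w = (LEAST k. badk w k)"

definition rho :: "nat \<Rightarrow> nat \<Rightarrow> nat" where
  "rho q p = q*m + (p mod m + m - 1) mod m"

definition g :: "step list \<Rightarrow> step list" where
  "g w = map (\<lambda>p. if p div m = key w div 2 then mix (odd (key w)) (w!p) (w!(rho (key w div 2) p))
                   else w!p) [0..<length w]"

lemma blk_pos: "q < d \<Longrightarrow> r < m \<Longrightarrow> q*m+r < d*m"
proof -
  assume "q < d" "r < m"
  hence "q*m + r < q*m + m" by simp
  also have "\<dots> = Suc q * m" by simp
  also have "\<dots> \<le> d*m" using \<open>q<d\<close> by (intro mult_right_mono) auto
  finally show ?thesis .
qed

lemma divmod_blk[simp]: "r < m \<Longrightarrow> (q*m+r) div m = q" "r < m \<Longrightarrow> (q*m+r) mod m = r"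
  using mpos by auto

lemma bad_key: "bad w \<Longrightarrow> badk w (key w)"
  unfolding bad_def key_def by (auto intro: LeastI_ex)

lemma g_len[simp]: "length (g w) = length w" by (simp add: g_def)

lemma rho_blk: "r < m \<Longrightarrow> rho q (q*m+r) = q*m + (r+m-1) mod m"
  by (simp add: rho_def)

lemma g_nth: "p < length w \<Longrightarrow> g w ! p = (if p div m = key w div 2 then mix (odd (key w)) (w!p) (w!(rho (key w div 2) p)) else w!p)"
  by (simp add: g_def)

lemma g_sbit_blk:
  assumes "length w = d*m" "q' < d" "r < m"
  shows "sbit e' (g w ! (q'*m+r)) =
    (if q' = key w div 2 \<and> e' = odd (key w) then sbit e' (w!(q'*m + (r+m-1) mod m)) else sbit e' (w!(q'*m+r)))"
proof -
  have "g w ! (q'*m+r) = (if q' = key w div 2 then mix (odd (key w)) (w!(q'*m+r)) (w!(rho (key w div 2) (q'*m+r))) else w!(q'*m+r))"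
    using assms blk_pos[OF assms(2,3)] g_nth[of "q'*m+r" w] by simp
  thus ?thesis using assms by (auto simp: sbit_mix rho_blk)
qed

lemma cnt_g:
  assumes "length w = d*m" "q' < d"
  shows "cnt (g w) q' e' = cnt w q' e'"
proof (cases "q' = key w div 2 \<and> e' = odd (key w)")
  case True
  have "cnt (g w) q' e' = (\<Sum>r<m. of_bool (sbit e' (w!(q'*m + (r+m-1) mod m))))"
    unfolding cnt_def using True assms by (intro sum.cong) (auto simp: g_sbit_blk)
  also have "\<dots> = cnt w q' e'" unfolding cnt_def
    by (rule rot_sum[OF mpos, where f="\<lambda>r. of_bool (sbit e' (w!(q'*m + r)))"])
  finally show ?thesis .
next
  case False
  thus ?thesis unfolding cnt_def using assms by (intro sum.cong) (auto simp: g_sbit_blk)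
qed

lemma cntk_g: "length w = d*m \<Longrightarrow> k < 2*d \<Longrightarrow> cntk (g w) k = cntk w k"
  unfolding cntk_def by (rule cnt_g) auto

lemma badk_g: "length w = d*m \<Longrightarrow> badk (g w) = badk w"
  by (auto simp: badk_def cntk_g fun_eq_iff)

lemma key_g: "length w = d*m \<Longrightarrow> key (g w) = key w"
  by (simp add: key_def badk_g)

lemma sum_dy_cnt:
  assumes "length w = d*m"
  shows "(\<Sum>p<d*m. dy (w!p)) = (\<Sum>q<d. int (cnt w q False) + int (cnt w q True) - int m)"
  unfolding sum_blocks cnt_def by (simp add: dy_sbits sum.distrib sum_subtractf)


lemma g_Opaths:
  assumes "w \<in> Opaths (d*m)"
  shows "g w \<in> Opaths (d*m)"
proof -
  have len: "length w = d*m" using assms by (simp add: Opaths_iff)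
  have "(\<Sum>p<d*m. dy (g w!p)) = (\<Sum>p<d*m. dy (w!p))"
    using len by (simp add: sum_dy_cnt cnt_g)
  thus ?thesis using assms by (simp add: Opaths_iff)
qed

lemma bad_g: "bad w \<Longrightarrow> bad (g w)"
  unfolding bad_def using g_Opaths by (auto simp: Opaths_iff badk_g)

definition Sblk :: "step list \<Rightarrow> nat \<Rightarrow> bool \<Rightarrow> int" where
  "Sblk w q e = (\<Sum>r<m. int (q*m+r) * of_bool (sbit e (w!(q*m+r))))"

lemma sig_blk:
  assumes "length w = d*m"
  shows "sig w = (\<Sum>q<d. Sblk w q False + Sblk w q True - (\<Sum>r<m. int (q*m+r)))"
  unfolding sig_def assms sum_blocks Sblk_def
  by (simp add: dy_sbits sum.distrib sum_subtractf algebra_simps)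

lemma Sblk_rot:
  "(\<Sum>r<m. int (q*m+r) * (F ((r+m-1) mod m) :: int)) =
   (\<Sum>r<m. int (q*m+r) * F r) + (\<Sum>r<m. F r) - int m * F (m-1)"
proof -
  have "(\<Sum>r<m. int (q*m+r) * F ((r+m-1) mod m)) =
        int (q*m) * (\<Sum>r<m. F ((r+m-1) mod m)) + (\<Sum>r<m. int r * F ((r+m-1) mod m))"
    by (simp add: sum_distrib_left sum.distrib algebra_simps)
  also have "\<dots> = int (q*m) * (\<Sum>r<m. F r) + ((\<Sum>r<m. int r * F r) + (\<Sum>r<m. F r) - int m * F (m-1))"
    using rot_sum[OF mpos, of F] rot_wsum[OF mpos, of F] by simp
  also have "\<dots> = (\<Sum>r<m. int (q*m+r) * F r) + (\<Sum>r<m. F r) - int m * F (m-1)"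
    by (simp add: sum_distrib_left sum.distrib algebra_simps)
  finally show ?thesis .
qed

lemma Sblk_g:
  assumes "length w = d*m" "q' < d"
  shows "Sblk (g w) q' e' = Sblk w q' e' + (if q' = key w div 2 \<and> e' = odd (key w)
     then int (cnt w q' e') - int m * of_bool (sbit e' (w!(q'*m+(m-1)))) else 0)"
proof (cases "q' = key w div 2 \<and> e' = odd (key w)")
  case True
  define F where "F r = (of_bool (sbit e' (w!(q'*m+r))) :: int)" for r
  have "Sblk (g w) q' e' = (\<Sum>r<m. int (q'*m+r) * F ((r+m-1) mod m))"
    unfolding Sblk_def F_def using True assms by (intro sum.cong) (auto simp: g_sbit_blk)
  also have "\<dots> = Sblk w q' e' + int (cnt w q' e') - int m * F (m-1)"
    unfolding Sblk_rot by (simp add: Sblk_def cnt_def F_def)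
  finally show ?thesis using True by (simp add: F_def)
next
  case False
  thus ?thesis unfolding Sblk_def using assms by (auto intro: sum.cong simp: g_sbit_blk)
qed

lemma sig_g:
  assumes "bad w"
  shows "\<exists>t. sig (g w) = sig w + int (cntk w (key w)) - int m * t"
proof -
  have len: "length w = d*m" using assms by (simp add: bad_def Opaths_iff)
  define q0 where "q0 = key w div 2"
  have "key w < d * 2" using bad_key[OF assms] by (simp add: badk_def)
  hence q0: "q0 < d" unfolding q0_def by (rule less_mult_imp_div_less)
  define X where "X q = (if q = q0 then int (cntk w (key w)) - int m * of_bool (sbit (odd (key w)) (w!(q*m+(m-1)))) else 0)" for q
  have "sig (g w) = (\<Sum>q<d. (Sblk w q False + Sblk w q True - (\<Sum>r<m. int (q*m+r))) + X q)"
    unfolding sig_blk[OF len] sig_blk[of "g w", simplified len g_len, simplified]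
    apply (rule sum.cong, simp)
    using len by (auto simp: Sblk_g X_def q0_def cntk_def)
  also have "\<dots> = sig w + (\<Sum>q<d. X q)" by (simp add: sum.distrib sig_blk[OF len])
  also have "(\<Sum>q<d. X q) = X q0" unfolding X_def using q0 by simp
  finally show ?thesis unfolding X_def by auto
qed

lemma rot_inv: "r < m \<Longrightarrow> ((r+1) mod m + m - 1) mod m = r"
  by (cases "r + 1 = m") auto

lemma blk_eq:
  assumes "length w = d*m" "length w' = d*m" "\<And>q r. q < d \<Longrightarrow> r < m \<Longrightarrow> w!(q*m+r) = w'!(q*m+r)"
  shows "w = w'"
proof (rule nth_equalityI)
  fix p assume "p < length w"
  hence "p div m < d" using assms(1) by (simp add: less_mult_imp_div_less)
  moreover have "p = p div m * m + p mod m" by simp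
  ultimately show "w!p = w'!p" using assms(3)[of "p div m" "p mod m"] mpos by (metis mod_less_divisor)
qed (use assms in simp)

lemma g_inj: "inj_on g {w. bad w}"
proof (rule inj_onI)
  fix w w' assume "w \<in> {w. bad w}" "w' \<in> {w. bad w}" and eq: "g w = g w'"
  hence lw: "length w = d*m" "length w' = d*m" by (auto simp: bad_def Opaths_iff)
  have k: "key w' = key w" using key_g[OF lw(1)] key_g[OF lw(2)] eq by metis
  show "w = w'"
  proof (rule blk_eq[OF lw])
    fix q r assume qr: "q < d" "r < m"
    show "w!(q*m+r) = w'!(q*m+r)"
    proof (subst step_eq_sbits, intro allI)
      fix e
      show "sbit e (w!(q*m+r)) = sbit e (w'!(q*m+r))"
      proof (cases "q = key w div 2 \<and> e = odd (key w)")
        case True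
        define r' where "r' = (r+1) mod m"
        have r': "r' < m" using mpos by (simp add: r'_def)
        have "sbit e (g w!(q*m+r')) = sbit e (g w'!(q*m+r'))" using eq by simp
        thus ?thesis using True k lw qr r' rot_inv[OF qr(2)] by (simp add: g_sbit_blk r'_def)
      next
        case False
        have "sbit e (g w!(q*m+r)) = sbit e (g w'!(q*m+r))" using eq by simp
        thus ?thesis using False k lw qr by (simp add: g_sbit_blk)
      qed
    qed
  qed
qed

lemma finite_bad: "finite {w. bad w}"
  by (rule finite_subset[OF _ finite_Opaths[of "d*m"]]) (auto simp: bad_def)

lemma g_image: "g ` {w. bad w} = {w. bad w}"
  by (rule endo_inj_surj[OF finite_bad _ g_inj]) (auto intro: bad_g)

lemma gk_image: "(g^^k) ` {w. bad w} = {w. bad w}"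
proof (induct k)
  case (Suc k)
  have "(g^^Suc k) ` {w. bad w} = g ` ((g^^k) ` {w. bad w})" by (simp add: image_comp)
  thus ?case using Suc g_image by simp
qed simp

lemma gk_inj: "inj_on (g^^k) {w. bad w}"
  by (rule eq_card_imp_inj_on[OF finite_bad]) (simp add: gk_image)

end

locale cyc2 = cyc +
  fixes E :: "int \<Rightarrow> complex"
  assumes E_add: "E (x + y) = E x * E y"
    and E_m: "E (int m * x) = 1"
    and E_ne: "0 < x \<Longrightarrow> x < int m \<Longrightarrow> E (- x) \<noteq> 1"
begin

lemma E_0: "E 0 = 1" using E_m[of 0] by simp

lemma E_pow: "E x ^ k = E (int k * x)"
  by (induct k) (simp_all add: E_0 E_add[symmetric] algebra_simps)

lemma iter:
  assumes "bad w"
  shows "bad ((g^^k) w) \<and> key ((g^^k) w) = key w \<and> cntk ((g^^k) w) (key w) = cntk w (key w)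
     \<and> E (- sig ((g^^k) w)) = E (- int (cntk w (key w))) ^ k * E (- sig w)"
proof (induct k)
  case 0 thus ?case using assms by simp
next
  case (Suc k)
  define w' where "w' = (g^^k) w"
  have b: "bad w'" and k: "key w' = key w" and c: "cntk w' (key w) = cntk w (key w)"
    and e: "E (- sig w') = E (- int (cntk w (key w))) ^ k * E (- sig w)"
    using Suc by (simp_all add: w'_def)
  have lw: "length w' = d*m" using b by (simp add: bad_def Opaths_iff)
  have kl: "key w < 2*d" using bad_key[OF assms] by (simp add: badk_def)
  obtain t where t: "sig (g w') = sig w' + int (cntk w' (key w')) - int m * t" using sig_g[OF b] by blast
  have "E (- sig (g w')) = E (- sig w') * E (- int (cntk w (key w))) * E (int m * t)"
    unfolding t k c E_add[symmetric] by (simp add: algebra_simps)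
  also have "\<dots> = E (- int (cntk w (key w))) ^ Suc k * E (- sig w)"
    using e E_m[of t] by (simp add: algebra_simps)
  finally show ?case
    using bad_g[OF b] key_g[OF lw] cntk_g[OF lw kl] k c by (simp add: w'_def)
qed

lemma bad_sum: "(\<Sum>w\<in>{w. bad w}. E (- sig w)) = 0"
proof -
  define S where "S = (\<Sum>w\<in>{w. bad w}. E (- sig w))"
  define lam where "lam w = E (- int (cntk w (key w)))" for w
  have Sk: "S = (\<Sum>w\<in>{w. bad w}. lam w ^ k * E (- sig w))" for k
  proof -
    have "S = sum (\<lambda>w. E (- sig w)) ((g^^k) ` {w. bad w})" unfolding S_def gk_image ..
    also have "\<dots> = (\<Sum>w\<in>{w. bad w}. E (- sig ((g^^k) w)))"
      by (simp add: sum.reindex[OF gk_inj])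
    also have "\<dots> = (\<Sum>w\<in>{w. bad w}. lam w ^ k * E (- sig w))"
      by (rule sum.cong) (auto simp: iter lam_def)
    finally show ?thesis .
  qed
  have geo: "(\<Sum>k<m. lam w ^ k) = 0" if "bad w" for w
  proof -
    define c where "c = int (cntk w (key w))"
    have c: "0 < c" "c < int m" using bad_key[OF that] by (auto simp: badk_def c_def)
    have ne: "lam w \<noteq> 1" using E_ne[OF c] by (simp add: lam_def c_def)
    have "lam w ^ m = 1" unfolding lam_def E_pow using E_m[of "- c"] by (simp add: c_def)
    thus ?thesis using ne by (simp add: sum_gp_strict)
  qed
  have "of_nat m * S = (\<Sum>k<m. S)" by simp
  also have "\<dots> = (\<Sum>k<m. \<Sum>w\<in>{w. bad w}. lam w ^ k * E (- sig w))" using Sk by simp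
  also have "\<dots> = (\<Sum>w\<in>{w. bad w}. (\<Sum>k<m. lam w ^ k) * E (- sig w))"
    by (subst sum.swap) (simp add: sum_distrib_right)
  also have "\<dots> = 0" using geo by simp
  finally show ?thesis using mpos by (simp add: S_def)
qed


definition good :: "step list \<Rightarrow> bool" where
  "good w = (w \<in> Opaths (d*m) \<and> \<not> (\<exists>k. badk w k))"

lemma sum_bool_0: "(\<Sum>r<m. of_bool (P r) :: nat) = 0 \<Longrightarrow> r < m \<Longrightarrow> \<not> P r"
  by auto

lemma sum_bool_m: assumes "(\<Sum>r<m. of_bool (P r) :: nat) = m" "r < m" shows "P r"
proof -
  have "card ({..<m} \<inter> {r. P r}) = card {..<m}" using assms(1) by simp
  hence "{..<m} \<inter> {r. P r} = {..<m}" by (intro card_subset_eq) auto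
  thus ?thesis using assms(2) by auto
qed

lemma cnt_le: "cnt w q e \<le> m"
proof -
  have "cnt w q e \<le> (\<Sum>r<m. 1)" unfolding cnt_def by (intro sum_mono) auto
  thus ?thesis by simp
qed

lemma good_const:
  assumes "good w" "q < d" "r < m"
  shows "w!(q*m+r) = w!(q*m)"
proof (subst step_eq_sbits, intro allI)
  fix e
  define k where "k = 2*q + of_bool e"
  have kd: "k div 2 = q" "odd k = e" by (cases e; simp add: k_def)+
  have "k < 2*d" using assms(2) by (cases e) (auto simp: k_def)
  hence "cntk w k = 0 \<or> cntk w k = m" using assms(1) cnt_le[of w "k div 2" "odd k"]
    unfolding good_def badk_def cntk_def by auto
  hence c: "cnt w q e = 0 \<or> cnt w q e = m" by (simp add: cntk_def kd)
  show "sbit e (w!(q*m+r)) = sbit e (w!(q*m))"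
  proof (cases "cnt w q e = 0")
    case True
    thus ?thesis using sum_bool_0[of "\<lambda>r. sbit e (w!(q*m+r))"] assms(3) mpos unfolding cnt_def by (metis add_0_right)
  next
    case False
    hence "cnt w q e = m" using c by simp
    thus ?thesis using sum_bool_m[of "\<lambda>r. sbit e (w!(q*m+r))"] assms(3) mpos unfolding cnt_def by (metis add_0_right)
  qed
qed

lemma good_bal:
  assumes "good w"
  shows "(\<Sum>q<d. dy (w!(q*m))) = 0"
proof -
  have "0 = (\<Sum>p<d*m. dy (w!p))" using assms by (simp add: good_def Opaths_iff)
  also have "\<dots> = (\<Sum>q<d. \<Sum>r<m. dy (w!(q*m)))" unfolding sum_blocks
    by (intro sum.cong refl) (simp add: good_const[OF assms])
  also have "\<dots> = int m * (\<Sum>q<d. dy (w!(q*m)))" by (simp add: sum_distrib_left)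
  finally show ?thesis using mpos by simp
qed

lemma good_sig:
  assumes "good w"
  shows "sig w = int m * (int m * (\<Sum>q<d. int q * dy (w!(q*m))))"
proof -
  have len: "length w = d*m" using assms by (simp add: good_def Opaths_iff)
  have "sig w = (\<Sum>q<d. \<Sum>r<m. int (q*m+r) * dy (w!(q*m)))"
    unfolding sig_def len sum_blocks by (intro sum.cong refl) (simp add: good_const[OF assms])
  also have "\<dots> = (\<Sum>q<d. int m * (int m * (int q * dy (w!(q*m)))) + (\<Sum>r<m. int r) * dy (w!(q*m)))"
    by (intro sum.cong refl) (simp add: sum_distrib_right sum.distrib algebra_simps)
  also have "\<dots> = int m * (int m * (\<Sum>q<d. int q * dy (w!(q*m)))) + (\<Sum>r<m. int r) * (\<Sum>q<d. dy (w!(q*m)))"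
    by (simp add: sum.distrib sum_distrib_left)
  finally show ?thesis using good_bal[OF assms] by simp
qed

definition phi :: "step list \<Rightarrow> step list" where
  "phi w = map (\<lambda>q. w!(q*m)) [0..<d]"

definition psi :: "step list \<Rightarrow> step list" where
  "psi u = map (\<lambda>p. u!(p div m)) [0..<d*m]"

lemma psi_good:
  assumes "u \<in> Opaths d"
  shows "good (psi u)"
proof -
  have lu: "length u = d" using assms by (simp add: Opaths_iff)
  have nth: "psi u ! (q*m+r) = u!q" if "q<d" "r<m" for q r
    using blk_pos[OF that] that by (simp add: psi_def)
  have "(\<Sum>p<d*m. dy (psi u!p)) = (\<Sum>q<d. \<Sum>r<m. dy (u!q))"
    unfolding sum_blocks by (intro sum.cong refl) (simp add: nth)
  also have "\<dots> = int m * (\<Sum>q<d. dy (u!q))" by (simp add: sum_distrib_left)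
  also have "\<dots> = 0" using assms by (simp add: Opaths_iff)
  finally have o: "psi u \<in> Opaths (d*m)" by (simp add: Opaths_iff psi_def)
  have "\<not> badk (psi u) k" for k
  proof
    assume b: "badk (psi u) k"
    hence "k div 2 < d" unfolding badk_def by (metis less_mult_imp_div_less mult.commute)
    hence "cntk (psi u) k = (\<Sum>r<m. of_bool (sbit (odd k) (u!(k div 2))))"
      unfolding cntk_def cnt_def by (intro sum.cong refl) (simp add: nth)
    thus False using b mpos by (cases "sbit (odd k) (u!(k div 2))") (auto simp: badk_def)
  qed
  thus ?thesis using o by (simp add: good_def)
qed

lemma phi_Opaths: "good w \<Longrightarrow> phi w \<in> Opaths d"
  using good_bal by (simp add: Opaths_iff phi_def)

lemma phi_psi: "u \<in> Opaths d \<Longrightarrow> phi (psi u) = u"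
  using mpos by (intro nth_equalityI) (auto simp: phi_def psi_def Opaths_iff blk_pos[of _ 0, simplified])

lemma psi_phi:
  assumes "good w" shows "psi (phi w) = w"
proof -
  have len: "length w = d*m" using assms by (simp add: good_def Opaths_iff)
  show ?thesis
  proof (rule blk_eq)
    fix q r assume qr: "q < d" "r < m"
    show "psi (phi w) ! (q*m+r) = w ! (q*m+r)"
      using blk_pos[OF qr] qr by (simp add: psi_def phi_def good_const[OF assms])
  qed (simp_all add: psi_def len)
qed

lemma card_good: "card {w. good w} = card (Opaths d)"
proof (rule bij_betw_same_card[of phi])
  show "bij_betw phi {w. good w} (Opaths d)"
    by (rule bij_betw_byWitness[where f'=psi]) (auto simp: psi_phi phi_psi phi_Opaths psi_good)
qed


lemma periodic_card:
  assumes dpos: "0 < d"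
  shows "card {w \<in> Opaths (d*m). \<forall>i<d*m. w!i = w!(i mod d)} = card (Opaths d)"
proof (rule bij_betw_same_card[of "take d"])
  define per where "per u = map (\<lambda>i. u!(i mod d)) [0..<d*m]" for u :: "step list"
  have dm: "d \<le> d*m" using mpos by simp
  have psum: "(\<Sum>p<d*m. f (p mod d)) = int m * (\<Sum>r<d. f r)" for f :: "nat \<Rightarrow> int"
  proof -
    have "(\<Sum>p<d*m. f (p mod d)) = (\<Sum>p<m*d. f (p mod d))" by (simp add: mult.commute)
    also have "\<dots> = (\<Sum>q<m. \<Sum>r<d. f ((q*d+r) mod d))" by (rule sum_blocks)
    also have "\<dots> = (\<Sum>q<m. \<Sum>r<d. f r)" by (intro sum.cong refl) simp
    finally show ?thesis by simp
  qed
  show "bij_betw (take d) {w \<in> Opaths (d*m). \<forall>i<d*m. w!i = w!(i mod d)} (Opaths d)"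
  proof (rule bij_betw_byWitness[where f'=per])
    show "\<forall>w\<in>{w \<in> Opaths (d*m). \<forall>i<d*m. w!i = w!(i mod d)}. per (take d w) = w"
      using dpos dm by (auto intro!: nth_equalityI simp: per_def Opaths_iff)
    show "\<forall>u\<in>Opaths d. take d (per u) = u"
    proof
      fix u assume "u \<in> Opaths d"
      hence lu: "length u = d" by (simp add: Opaths_iff)
      have ti: "take d (per u) ! i = u ! i" if "i < d" for i
      proof -
        have "i < d*m" using that dm by linarith
        thus ?thesis using that lu by (simp add: per_def)
      qed
      have tl: "length (take d (per u)) = length u" using lu dm by (simp add: per_def)
      show "take d (per u) = u"
      proof (rule nth_equalityI[OF tl])
        fix i assume "i < length (take d (per u))"
        hence "i < d" using tl lu by simp
        thus "take d (per u) ! i = u ! i" by (rule ti)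
      qed
    qed
    show "take d ` {w \<in> Opaths (d*m). \<forall>i<d*m. w!i = w!(i mod d)} \<subseteq> Opaths d"
    proof safe
      fix w assume w: "w \<in> Opaths (d*m)" "\<forall>i<d*m. w!i = w!(i mod d)"
      have "0 = (\<Sum>p<d*m. dy (w!p))" using w by (simp add: Opaths_iff)
      also have "\<dots> = (\<Sum>p<d*m. dy (w!(p mod d)))" using w by (intro sum.cong) auto
      also have "\<dots> = int m * (\<Sum>r<d. dy (w!r))" by (rule psum)
      finally have "0 = int m * (\<Sum>r<d. dy (w!r))" .
      hence "(\<Sum>r<d. dy (w!r)) = 0" using mpos by simp
      thus "take d w \<in> Opaths d" using w(1) dm by (simp add: Opaths_iff)
    qed
    show "per ` Opaths d \<subseteq> {w \<in> Opaths (d*m). \<forall>i<d*m. w!i = w!(i mod d)}"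
    proof safe
      fix u assume u: "u \<in> Opaths d"
      have "(\<Sum>p<d*m. dy (per u!p)) = (\<Sum>p<d*m. dy (u!(p mod d)))" by (intro sum.cong) (auto simp: per_def)
      also have "\<dots> = int m * (\<Sum>r<d. dy (u!r))" by (rule psum)
      finally show "per u \<in> Opaths (d*m)" using u by (simp add: Opaths_iff per_def)
      show "per u ! i = per u ! (i mod d)" if "i < d*m" for i
      proof -
        have "i mod d < d*m" using dpos dm by (meson le_trans mod_less_divisor not_le)
        thus ?thesis using that by (simp add: per_def)
      qed
    qed
  qed
qed

end

context cyc2
begin

lemma total: "(\<Sum>w\<in>Opaths (d*m). E (- sig w)) = of_nat (card (Opaths d))"
proof -
  have split: "Opaths (d*m) = {w. good w} \<union> {w. bad w}" by (auto simp: good_def bad_def)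
  have fin: "finite {w. good w}" by (rule finite_subset[OF _ finite_Opaths[of "d*m"]]) (auto simp: good_def)
  have "(\<Sum>w\<in>Opaths (d*m). E (- sig w)) = (\<Sum>w\<in>{w. good w}. E (- sig w)) + (\<Sum>w\<in>{w. bad w}. E (- sig w))"
    unfolding split by (rule sum.union_disjoint[OF fin finite_bad]) (auto simp: good_def bad_def)
  also have "(\<Sum>w\<in>{w. good w}. E (- sig w)) = (\<Sum>w\<in>{w. good w}. 1)"
  proof (rule sum.cong)
    fix w assume "w \<in> {w. good w}"
    hence "- sig w = int m * (- (int m * (\<Sum>q<d. int q * dy (w!(q*m)))))" using good_sig by simp
    thus "E (- sig w) = 1" by (metis E_m)
  qed simp
  finally show ?thesis using bad_sum card_good by simp
qed

end



lemma rot_rotate: "rot w = rotate (length w - 1) w"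
proof (cases "w = []")
  case False
  hence w: "w = butlast w @ [last w]" by simp
  have "rotate (length w - 1) w = rotate (length (butlast w)) (butlast w @ [last w])"
    by (subst (2) w) simp
  also have "\<dots> = [last w] @ butlast w" by (rule rotate_append)
  finally show ?thesis using False by (simp add: rot_def)
qed (simp add: rot_def)

lemma rot_len[simp]: "length (rot w) = length w"
  by (simp add: rot_rotate)

lemma rot_pow_len: "length ((rot^^k) w) = length w"
  by (induct k) auto

lemma rot_pow: "(rot^^k) w = rotate (k * (length w - 1)) w"
proof (induct k)
  case (Suc k)
  have "(rot^^Suc k) w = rot ((rot^^k) w)" by simp
  also have "\<dots> = rotate (length w - 1) ((rot^^k) w)" by (simp only: rot_rotate rot_pow_len)
  also have "\<dots> = rotate (length w - 1) (rotate (k * (length w - 1)) w)" using Suc by simp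
  also have "\<dots> = rotate (Suc k * (length w - 1)) w" by (simp add: rotate_rotate add.commute)
  finally show ?case .
qed simp

lemma rotate_fixed_iff:
  assumes "length w = n"
  shows "rotate s w = w \<longleftrightarrow> (\<forall>i<n. w!((s+i) mod n) = w!i)"
proof
  assume "rotate s w = w"
  thus "\<forall>i<n. w!((s+i) mod n) = w!i" using assms by (metis nth_rotate)
next
  assume h: "\<forall>i<n. w!((s+i) mod n) = w!i"
  show "rotate s w = w" by (rule nth_equalityI) (use h assms in \<open>auto simp: nth_rotate\<close>)
qed

lemma shift_periodic:
  assumes n: "0 < n" and len: "length w = n"
  shows "(\<forall>i<n. w!((s+i) mod n) = w!i) \<longleftrightarrow> (\<forall>i<n. w!i = w!(i mod gcd n s))"
proof
  define g where "g = gcd n s"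
  have gpos: "0 < g" using n by (simp add: g_def)
  assume H: "\<forall>i<n. w!((s+i) mod n) = w!i"
  have Hk: "\<forall>i<n. w!((k*s+i) mod n) = w!i" for k
  proof (induct k)
    case (Suc k)
    show ?case
    proof (intro allI impI)
      fix i assume i: "i < n"
      have "(Suc k * s + i) mod n = (s + (k*s+i) mod n) mod n" by (simp add: mod_add_right_eq add.assoc)
      hence "w!((Suc k * s + i) mod n) = w!((k*s+i) mod n)" using H n by (simp add: mod_less_divisor)
      thus "w!((Suc k * s + i) mod n) = w!i" using Suc i by simp
    qed
  qed simp
  obtain x y where xy: "n*x = s*y + g" using bezout_nat[of n s] n g_def by auto
  have Hg: "w!((i+g) mod n) = w!i" if i: "i < n" for i
  proof -
    have "(y*s + (i+g) mod n) mod n = (s*y + g + i) mod n" by (simp add: mod_add_right_eq algebra_simps)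
    also have "s*y + g + i = i + n*x" using xy by simp
    also have "(i + n*x) mod n = i" using i by simp
    finally show ?thesis using Hk[of y] n by (metis mod_less_divisor)
  qed
  show "\<forall>i<n. w!i = w!(i mod g)"
  proof (intro allI impI)
    fix i show "i < n \<Longrightarrow> w!i = w!(i mod g)"
    proof (induct i rule: less_induct)
      case (less i)
      show ?case
      proof (cases "i < g")
        case False
        hence "w!((i-g+g) mod n) = w!(i-g)" using Hg[of "i-g"] less by simp
        hence "w!i = w!(i-g)" using False less by simp
        also have "\<dots> = w!((i-g) mod g)" using less gpos False by simp
        also have "(i-g) mod g = i mod g" using False by (simp add: le_mod_geq)
        finally show ?thesis .
      qed simp
    qed
  qed
next
  define g where "g = gcd n s"
  assume P: "\<forall>i<n. w!i = w!(i mod gcd n s)"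
  show "\<forall>i<n. w!((s+i) mod n) = w!i"
  proof (intro allI impI)
    fix i assume i: "i < n"
    have "w!((s+i) mod n) = w!((s+i) mod n mod g)" using P n g_def by simp
    also have "(s+i) mod n mod g = (s+i) mod g" by (simp add: mod_mod_cancel g_def)
    also have "\<dots> = i mod g" by (simp add: g_def mod_add_left_eq[symmetric])
    also have "w!(i mod g) = w!i" using P i g_def by simp
    finally show "w!((s+i) mod n) = w!i" .
  qed
qed


lemma E_props:
  fixes n j :: nat
  assumes n: "n \<ge> 1"
  defines "d \<equiv> gcd n j" and "m \<equiv> n div gcd n j"
  defines "E \<equiv> (\<lambda>x::int. cis (2*pi*(real j * real_of_int x)/real n))"
  shows "cyc2 m E"
proof -
  have dpos: "0 < d" using n by (simp add: d_def)
  have nd: "n = d*m" by (simp add: d_def m_def)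
  have mpos: "0 < m" using n nd by (cases m) auto
  define j' where "j' = j div d"
  have jd: "j = d*j'" by (simp add: j'_def d_def)
  have cop: "coprime m j'" unfolding m_def j'_def d_def using div_gcd_coprime[of n j] n by simp
  show ?thesis
  proof (unfold_locales)
    show "0 < m" by (rule mpos)
    fix x y :: int
    show "E (x + y) = E x * E y"
      by (simp add: E_def cis_mult algebra_simps add_divide_distrib)
    have "2*pi*(real j * real_of_int (int m * x))/real n = 2*pi*real_of_int (int j' * x)"
      using dpos mpos unfolding jd nd by (simp add: field_simps)
    thus "E (int m * x) = 1" unfolding E_def by simp
  next
    fix x :: int assume x: "0 < x" "x < int m"
    show "E (- x) \<noteq> 1"
    proof
      assume "E (- x) = 1"
      then obtain k where k: "2*pi*(real j * real_of_int (-x))/real n = of_int k * (2*pi)"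
        unfolding E_def cis_eq_1_iff by blast
      hence "pi * (real j * real_of_int (-x)) = pi * (of_int k * real n)" using n by (simp add: field_simps)
      hence "real j * real_of_int (-x) = of_int k * real n" using mult_left_cancel[OF pi_neq_zero] by blast
      hence "real_of_int (int j * (-x)) = real_of_int (k * int n)" by simp
      hence "int j * (-x) = k * int n" by (simp only: of_int_eq_iff)
      hence "int d * (int j' * (-x)) = int d * (k * int m)" unfolding jd nd by (simp add: algebra_simps)
      moreover have "int d \<noteq> 0" using dpos by simp
      ultimately have "int j' * (-x) = k * int m" using mult_left_cancel by blast
      hence "int m dvd int j' * x" by (metis dvd_minus_iff dvd_triv_right mult_minus_right)
      hence "int m dvd x" using cop by (simp add: coprime_dvd_mult_right_iff coprime_commute)
      thus False using x by (meson zdvd_imp_le not_le)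
    qed
  qed
qed

theorem main_result:
  fixes n j :: nat
  assumes "n \<ge> 1" and "j < n"
  shows "poly (Opoly n) ((cis (2 * pi / real n)) ^ j)
           = of_nat (card {P \<in> Opaths n. (rot ^^ j) P = P})"
proof -
  define d where "d = gcd n j"
  define m where "m = n div gcd n j"
  define E where "E = (\<lambda>x::int. cis (2*pi*(real j * real_of_int x)/real n))"
  interpret cyc2 m d E unfolding d_def m_def E_def by (rule E_props[OF assms(1)])
  have dpos: "0 < d" using assms by (simp add: d_def)
  have nd: "n = d*m" by (simp add: d_def m_def)
  have zpow: "(cis (2 * pi / real n) ^ j) ^ a = E (int a)" for a
  proof -
    have "(cis (2 * pi / real n) ^ j) ^ a = cis (real (j*a) * (2 * pi / real n))"
      by (simp only: power_mult[symmetric]) (rule DeMoivre)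
    also have "\<dots> = E (int a)" unfolding E_def
      by (rule arg_cong[where f=cis]) (simp add: algebra_simps times_divide_eq_right)
    finally show ?thesis .
  qed
  have "poly (Opoly n) ((cis (2 * pi / real n)) ^ j) = (\<Sum>w\<in>Opaths n. (cis (2 * pi / real n) ^ j) ^ area w)"
    by (simp add: Opoly_def poly_sum poly_monom)
  also have "\<dots> = (\<Sum>w\<in>Opaths n. E (- sig w))"
  proof (rule sum.cong)
    fix w assume w: "w \<in> Opaths n"
    define M where "M = Min ((relh w) ` {0..length w})"
    have "int (area w) = - sig w + int m * (- (int d * M))"
      unfolding area_formula[OF w] M_def[symmetric] using nd by (simp add: algebra_simps)
    hence "(cis (2 * pi / real n) ^ j) ^ area w = E (- sig w + int m * (- (int d * M)))"
      unfolding zpow by simp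
    also have "\<dots> = E (- sig w)" by (simp only: E_add E_m mult_1_right)
    finally show "(cis (2 * pi / real n) ^ j) ^ area w = E (- sig w)" .
  qed simp
  also have "\<dots> = of_nat (card (Opaths d))" using total nd by simp
  also have "card (Opaths d) = card {w \<in> Opaths n. \<forall>i<n. w!i = w!(i mod d)}"
    using periodic_card[OF dpos] nd by simp
  also have "{w \<in> Opaths n. \<forall>i<n. w!i = w!(i mod d)} = {P \<in> Opaths n. (rot ^^ j) P = P}"
  proof (rule Collect_cong, rule conj_cong[OF refl])
    fix w assume "w \<in> Opaths n"
    hence len: "length w = n" by (simp add: Opaths_iff)
    have g: "gcd n (j * (n - 1)) = d" unfolding d_def
      using assms(1) by (intro gcd_mult_right_right_cancel coprime_diff_one_right_nat) simp
    have "(rot ^^ j) w = w \<longleftrightarrow> (\<forall>i<n. w!((j * (n - 1) + i) mod n) = w!i)"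
      unfolding rot_pow len by (rule rotate_fixed_iff[OF len])
    also have "\<dots> \<longleftrightarrow> (\<forall>i<n. w!i = w!(i mod d))"
      using shift_periodic[OF _ len, of "j * (n - 1)"] assms(1) g by simp
    finally show "(\<forall>i<n. w!i = w!(i mod d)) = ((rot ^^ j) w = w)" by simp
  qed
  finally show ?thesis .
qed


theorem proposition6p1:
  fixes n j :: nat
  assumes "n \<ge> 1" and "j < n"
  shows "poly (Opoly n) ((cis (2 * pi / real n)) ^ j)
           = of_nat (card {P \<in> Opaths n. (rot ^^ j) P = P})"
  using main_result[OF assms] .

end
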